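(* Let $T_1=(V_1,E_1)$ and $T_2=(V_2,E_2)$ be trees with $|V_1|=|V_2|=n$. Suppose there exist labelings $\mathcal{L}_1,\mathcal{L}_2$ and edge orderings $\pi_1,\pi_2$ of $T_1,T_2$ respectively, and an element $\sigma\in S_n$, such that $$\sigma\,\mathcal{K}_{\mathcal{L}_1,\pi_1}(T_1)\,\sigma^{-1}=\mathcal{K}_{\mathcal{L}_2,\pi_2}(T_2).$$ Then $T_1$ and $T_2$ are isomorphic.
   Context: $\mathbb{C}[S_n]$ is the group algebra of the symmetric group $S_n$. A labeling of a graph $G=(V,E)$ with $|V|=n$ is a bijection $\mathcal{L}:V\to\{1,\dots,n\}$; under it an edge $\{u,v\}$ corresponds to the transposition $(\mathcal{L}(u)\,\mathcal{L}(v))\in S_n$. For a labeling $\mathcal{L}$ and an ordering $\pi=(e_1,\dots,e_m)$ of $E$, $\mathcal{K}_{\mathcal{L},\pi}(G)=n!\,(1-t_1)(1-t_2)\cdots(1-t_m)\in\mathbb{C}[S_n]$, where $t_r$ is the transposition corresponding to $e_r$ under $\mathcal{L}$ and the product is in the order of $\pi$. *)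

theory Defs
  imports Complex_Main "HOL-Combinatorics.Permutations" "HOL-Combinatorics.Transposition"
begin

definition simple_graph :: "'a set \<Rightarrow> 'a set set \<Rightarrow> bool" where
  "simple_graph V E \<longleftrightarrow> finite V \<and> (\<forall>e\<in>E. \<exists>u v. e = {u, v} \<and> u \<noteq> v \<and> u \<in> V \<and> v \<in> V)"

definition adj :: "'a set set \<Rightarrow> 'a \<Rightarrow> 'a \<Rightarrow> bool" where
  "adj E u v \<longleftrightarrow> {u, v} \<in> E"

definition connected_graph :: "'a set \<Rightarrow> 'a set set \<Rightarrow> bool" where
  "connected_graph V E \<longleftrightarrow> (\<forall>u\<in>V. \<forall>v\<in>V. (u, v) \<in> {(x, y). adj E x y}\<^sup>*)"

definition is_cycle :: "'a set \<Rightarrow> 'a set set \<Rightarrow> 'a list \<Rightarrow> bool" where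
  "is_cycle V E cs \<longleftrightarrow> length cs \<ge> 3 \<and> distinct cs \<and> set cs \<subseteq> V \<and>
     (\<forall>i < length cs - 1. adj E (cs ! i) (cs ! Suc i)) \<and> adj E (last cs) (hd cs)"

definition acyclic_graph :: "'a set \<Rightarrow> 'a set set \<Rightarrow> bool" where
  "acyclic_graph V E \<longleftrightarrow> \<not> (\<exists>cs. is_cycle V E cs)"

definition is_tree :: "'a set \<Rightarrow> 'a set set \<Rightarrow> bool" where
  "is_tree V E \<longleftrightarrow> simple_graph V E \<and> V \<noteq> {} \<and> connected_graph V E \<and> acyclic_graph V E"

definition graph_iso :: "'a set \<Rightarrow> 'a set set \<Rightarrow> 'b set \<Rightarrow> 'b set set \<Rightarrow> bool" where
  "graph_iso V1 E1 V2 E2 \<longleftrightarrow> (\<exists>f. bij_betw f V1 V2 \<and>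
     (\<forall>u\<in>V1. \<forall>v\<in>V1. ({u, v} \<in> E1 \<longleftrightarrow> {f u, f v} \<in> E2)))"

text \<open>S_n is the set of permutations of {1..n} (functions nat => nat fixing everything
  outside {1..n}); the product of permutations is composition (p * q = p o q).
  An element of C[S_n] is a function S_n -> C, represented as a function on all
  nat => nat which vanishes outside S_n.\<close>

type_synonym galg = "(nat \<Rightarrow> nat) \<Rightarrow> complex"

definition Sn :: "nat \<Rightarrow> (nat \<Rightarrow> nat) set" where
  "Sn n = {p. p permutes {1..n}}"

definition ga_of :: "nat \<Rightarrow> (nat \<Rightarrow> nat) \<Rightarrow> galg" where
  "ga_of n g = (\<lambda>p. if p \<in> Sn n \<and> p = g then 1 else 0)"

definition ga_one :: "nat \<Rightarrow> galg" where
  "ga_one n = ga_of n id"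

definition ga_add :: "nat \<Rightarrow> galg \<Rightarrow> galg \<Rightarrow> galg" where
  "ga_add n a b = (\<lambda>p. if p \<in> Sn n then a p + b p else 0)"

definition ga_scale :: "nat \<Rightarrow> complex \<Rightarrow> galg \<Rightarrow> galg" where
  "ga_scale n c a = (\<lambda>p. if p \<in> Sn n then c * a p else 0)"

definition ga_mult :: "nat \<Rightarrow> galg \<Rightarrow> galg \<Rightarrow> galg" where
  "ga_mult n a b = (\<lambda>g. if g \<in> Sn n then (\<Sum>h\<in>Sn n. a h * b (inv h \<circ> g)) else 0)"

definition edge_transp :: "('a \<Rightarrow> nat) \<Rightarrow> 'a set \<Rightarrow> (nat \<Rightarrow> nat)" where
  "edge_transp L e = (THE t. \<exists>u v. e = {u, v} \<and> t = transpose (L u) (L v))"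

fun prod_one_minus :: "nat \<Rightarrow> ('a \<Rightarrow> nat) \<Rightarrow> 'a set list \<Rightarrow> galg" where
  "prod_one_minus n L [] = ga_one n"
| "prod_one_minus n L (e # es) =
     ga_mult n (ga_add n (ga_one n) (ga_scale n (-1) (ga_of n (edge_transp L e))))
               (prod_one_minus n L es)"

definition K_elem :: "nat \<Rightarrow> ('a \<Rightarrow> nat) \<Rightarrow> 'a set list \<Rightarrow> galg" where
  "K_elem n L \<pi> = ga_scale n (of_nat (fact n)) (prod_one_minus n L \<pi>)"

definition is_labeling :: "'a set \<Rightarrow> nat \<Rightarrow> ('a \<Rightarrow> nat) \<Rightarrow> bool" where
  "is_labeling V n L \<longleftrightarrow> bij_betw L V {1..n}"

definition is_edge_ordering :: "'a set set \<Rightarrow> 'a set list \<Rightarrow> bool" where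
  "is_edge_ordering E \<pi> \<longleftrightarrow> distinct \<pi> \<and> set \<pi> = E"

end

theory Submission
  imports Defs "HOL-Library.Sublist"
begin



definition prodT :: "('a \<Rightarrow> nat) \<Rightarrow> 'a set list \<Rightarrow> (nat \<Rightarrow> nat)" where
  "prodT L s = foldr (\<lambda>e p. edge_transp L e \<circ> p) s id"

definition cc :: "('a \<Rightarrow> nat) \<Rightarrow> 'a set list \<Rightarrow> (nat \<Rightarrow> nat) \<Rightarrow> int" where
  "cc L es g = sum_list (map (\<lambda>s. if g = prodT L s then (-1::int)^length s else 0) (subseqs es))"

lemma Sn_id[simp]: "id \<in> Sn n" by (simp add: Sn_def)

lemma sum_list_negf': "sum_list (map (\<lambda>x. - f x) xs) = - sum_list (map f xs :: int list)"
  by (induction xs) auto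

lemma mult_if_delta: "(if P then 1 else 0) * (x::complex) = (if P then x else 0)" by simp

lemma sum_two_delta:
  assumes "finite A" "a \<in> A" "b \<in> A" "a \<noteq> b"
  shows "(\<Sum>h\<in>A. (if h = a then 1 else 0) * F h - (if h = b then 1 else 0) * F h) = F a - (F b :: complex)"
proof -
  have "(\<Sum>h\<in>A. (if h = a then 1 else 0) * F h - (if h = b then 1 else 0) * F h)
     = (\<Sum>h\<in>A. (if h = a then F h else 0)) - (\<Sum>h\<in>A. (if h = b then F h else 0))"
    by (simp add: sum_subtractf mult_if_delta)
  also have "\<dots> = F a - F b" using assms by (simp add: sum.delta)
  finally show ?thesis .
qed

lemma pom_out: "g \<notin> Sn n \<Longrightarrow> prod_one_minus n L es g = 0"
  by (cases es) (auto simp: ga_one_def ga_of_def ga_mult_def)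

lemma cc_Cons:
  assumes "edge_transp L e = t" "t \<circ> t = id"
  shows "cc L (e # es) g = cc L es g - cc L es (t \<circ> g)"
proof -
  define f where "f = (\<lambda>g s. if g = prodT L s then (-1::int)^length s else 0)"
  have eq: "(g = t \<circ> p) = (t \<circ> g = p)" for p
    by (metis assms(2) comp_assoc id_comp)
  have pc: "prodT L (e # s) = t \<circ> prodT L s" for s
    using assms(1) by (simp add: prodT_def)
  have fc: "f g (e # s) = - f (t \<circ> g) s" for s
    unfolding f_def pc eq by simp
  have "cc L (e # es) g = sum_list (map (\<lambda>s. f g (e # s)) (subseqs es)) + cc L es g"
    by (simp add: cc_def f_def Let_def o_def)
  also have "sum_list (map (\<lambda>s. f g (e # s)) (subseqs es)) = - cc L es (t \<circ> g)"
  proof -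
    have "map (\<lambda>s. f g (e # s)) (subseqs es) = map (\<lambda>s. - f (t \<circ> g) s) (subseqs es)"
      by (simp add: fc)
    then show ?thesis by (simp only: sum_list_negf') (simp add: cc_def f_def)
  qed
  finally show ?thesis by simp
qed

lemma pom_cc:
  assumes "\<forall>e\<in>set es. \<exists>a b. a \<noteq> b \<and> a \<in> {1..n} \<and> b \<in> {1..n} \<and> edge_transp L e = transpose a b"
    and "g \<in> Sn n"
  shows "prod_one_minus n L es g = of_int (cc L es g)"
  using assms
proof (induction es arbitrary: g)
  case Nil
  then show ?case by (simp add: ga_one_def ga_of_def cc_def prodT_def)
next
  case (Cons e es)
  then obtain a b where ab: "a \<noteq> b" "a \<in> {1..n}" "b \<in> {1..n}" "edge_transp L e = transpose a b"
    by auto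
  define t where "t = transpose a b"
  have tS: "t \<in> Sn n" using ab by (simp add: Sn_def t_def permutes_swap_id)
  have tid: "t \<noteq> id" using ab by (simp add: t_def transpose_eq_id_iff)
  have tt: "t \<circ> t = id" by (simp add: t_def)
  have tgS: "t \<circ> g \<in> Sn n" using tS Cons.prems(2) by (simp add: Sn_def permutes_compose)
  define F where "F = (\<lambda>h. prod_one_minus n L es (inv h \<circ> g))"
  have fin: "finite (Sn n)" by (simp add: Sn_def finite_permutations)
  have "prod_one_minus n L (e # es) g =
     (\<Sum>h\<in>Sn n. (if h = id then 1 else 0) * F h - (if h = t then 1 else 0) * F h)"
    using Cons.prems(2) ab(4)
    by (auto simp: ga_mult_def ga_add_def ga_one_def ga_scale_def ga_of_def F_def t_def[symmetric]
        left_diff_distrib intro!: sum.cong)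
  also have "\<dots> = F id - F t" using sum_two_delta[OF fin Sn_id tS tid[symmetric]] by simp
  also have "F id = prod_one_minus n L es g" by (simp add: F_def)
  also have "F t = prod_one_minus n L es (t \<circ> g)" by (simp add: F_def t_def)
  finally show ?case using Cons.IH Cons.prems tgS cc_Cons[OF ab(4)[unfolded t_def[symmetric]] tt]
    by simp
qed

lemma perm_eq_shift:
  assumes "h permutes S" "s permutes S"
  shows "(inv h \<circ> g = s) = (h = g \<circ> inv s)"
proof
  assume "inv h \<circ> g = s"
  then have "h \<circ> (inv h \<circ> g) = h \<circ> s" by simp
  then have "g = h \<circ> s" using permutes_inv_o(1)[OF assms(1)] by (simp add: o_assoc)
  then show "h = g \<circ> inv s" using permutes_inv_o(1)[OF assms(2)] by (simp add: comp_assoc)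
next
  assume "h = g \<circ> inv s"
  then have "h \<circ> s = g" using permutes_inv_o(2)[OF assms(2)] by (simp add: comp_assoc)
  then have "inv h \<circ> (h \<circ> s) = inv h \<circ> g" by simp
  then show "inv h \<circ> g = s" using permutes_inv_o(2)[OF assms(1)] by (simp add: o_assoc)
qed

lemma mult_of_left:
  assumes "s \<in> Sn n"
  shows "ga_mult n (ga_of n s) a g = (if g \<in> Sn n then a (inv s \<circ> g) else 0)"
proof -
  have fin: "finite (Sn n)" by (simp add: Sn_def finite_permutations)
  have "(\<Sum>h\<in>Sn n. ga_of n s h * a (inv h \<circ> g)) = (\<Sum>h\<in>Sn n. if h = s then a (inv h \<circ> g) else 0)"
    by (rule sum.cong) (auto simp: ga_of_def)
  also have "\<dots> = a (inv s \<circ> g)" using fin assms by (simp add: sum.delta)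
  finally show ?thesis by (simp add: ga_mult_def)
qed

lemma mult_of_right:
  assumes "s \<in> Sn n" "g \<in> Sn n"
  shows "ga_mult n b (ga_of n s) g = b (g \<circ> inv s)"
proof -
  have fin: "finite (Sn n)" by (simp add: Sn_def finite_permutations)
  have gs: "g \<circ> inv s \<in> Sn n" using assms by (simp add: Sn_def permutes_compose permutes_inv)
  have "(\<Sum>h\<in>Sn n. b h * ga_of n s (inv h \<circ> g)) = (\<Sum>h\<in>Sn n. if h = g \<circ> inv s then b h else 0)"
  proof (rule sum.cong)
    fix h assume h: "h \<in> Sn n"
    have "ga_of n s x = (if x = s then 1 else 0)" for x using assms(1) by (auto simp: ga_of_def)
    then show "b h * ga_of n s (inv h \<circ> g) = (if h = g \<circ> inv s then b h else 0)"
      using perm_eq_shift[of h "{1..n}" s g] h assms by (auto simp: Sn_def)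
  qed simp
  also have "\<dots> = b (g \<circ> inv s)" using fin gs by (simp add: sum.delta)
  finally show ?thesis using assms by (simp add: ga_mult_def)
qed

lemma conj_val:
  assumes "\<sigma> \<in> Sn n" "g \<in> Sn n"
  shows "ga_mult n (ga_mult n (ga_of n \<sigma>) a) (ga_of n (inv \<sigma>)) g = a (inv \<sigma> \<circ> g \<circ> \<sigma>)"
proof -
  have iS: "inv \<sigma> \<in> Sn n" using assms by (simp add: Sn_def permutes_inv)
  have ii: "inv (inv \<sigma>) = \<sigma>" using assms by (simp add: Sn_def permutes_inv_inv)
  have gs: "g \<circ> \<sigma> \<in> Sn n" using assms by (simp add: Sn_def permutes_compose)
  show ?thesis using mult_of_right[OF iS assms(2)] mult_of_left[OF assms(1)] ii gs
    by (simp add: o_assoc)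
qed




definition Rl :: "('x \<Rightarrow> nat) \<Rightarrow> ('x \<Rightarrow> nat) \<Rightarrow> 'x set \<Rightarrow> (nat \<times> nat) set" where
  "Rl A B F = {(x, y). \<exists>f\<in>F. {x, y} = {A f, B f}}"

definition PT :: "('x \<Rightarrow> nat) \<Rightarrow> ('x \<Rightarrow> nat) \<Rightarrow> 'x list \<Rightarrow> nat \<Rightarrow> nat" where
  "PT A B s = foldr (\<lambda>e p. transpose (A e) (B e) \<circ> p) s id"

lemma Rl_conv: "(Rl A B F)\<inverse> = Rl A B F"
  by (auto simp: Rl_def insert_commute)

lemma Rl_sym: "(x, y) \<in> (Rl A B F)\<^sup>* \<Longrightarrow> (y, x) \<in> (Rl A B F)\<^sup>*"
  using rtrancl_converseI[of x y "Rl A B F"] by (simp add: Rl_conv)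

lemma Rl_mono: "F \<subseteq> G \<Longrightarrow> (Rl A B F)\<^sup>* \<subseteq> (Rl A B G)\<^sup>*"
  by (rule rtrancl_mono) (auto simp: Rl_def)

lemma forest:
  assumes "distinct s" "set s \<subseteq> E"
    and H: "\<forall>e\<in>E. A e \<noteq> B e \<and> (A e, B e) \<notin> (Rl A B (E - {e}))\<^sup>*"
  shows "(\<forall>x. (x, PT A B s x) \<in> (Rl A B (set s))\<^sup>*) \<and> (\<forall>e\<in>set s. \<forall>x\<in>{A e, B e}. PT A B s x \<noteq> x)"
  using assms(1,2)
proof (induction s)
  case Nil
  then show ?case by (simp add: PT_def)
next
  case (Cons e s)
  define a where "a = A e"
  define b where "b = B e"
  define q where "q = PT A B s"
  have eE: "e \<in> E" and sE: "set s \<subseteq> E - {e}" using Cons.prems by auto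
  have ab: "a \<noteq> b" using H eE by (simp add: a_def b_def)
  have nc: "(a, b) \<notin> (Rl A B (set s))\<^sup>*"
    using H eE Rl_mono[OF sE, of A B] unfolding a_def b_def by blast
  have IH: "\<forall>x. (x, q x) \<in> (Rl A B (set s))\<^sup>*" "\<forall>f\<in>set s. \<forall>x\<in>{A f, B f}. q x \<noteq> x"
    using Cons.IH Cons.prems by (auto simp: q_def)
  have pe: "PT A B (e # s) = transpose a b \<circ> q" by (simp add: PT_def a_def b_def q_def)
  have sub: "(Rl A B (set s))\<^sup>* \<subseteq> (Rl A B (set (e # s)))\<^sup>*" by (rule Rl_mono) auto
  have abR: "(a, b) \<in> Rl A B (set (e # s))" "(b, a) \<in> Rl A B (set (e # s))"
    by (auto simp: Rl_def a_def b_def)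
  have conn: "(x, PT A B (e # s) x) \<in> (Rl A B (set (e # s)))\<^sup>*" for x
  proof -
    have 1: "(x, q x) \<in> (Rl A B (set (e # s)))\<^sup>*" using IH(1) sub by blast
    have "(q x, transpose a b (q x)) \<in> (Rl A B (set (e # s)))\<^sup>*"
      using abR by (cases "q x = a"; cases "q x = b") auto
    with 1 show ?thesis by (simp add: pe)
  qed
  have mv: "PT A B (e # s) x \<noteq> x" if xc: "x \<in> {a, b} \<or> (\<exists>f\<in>set s. x \<in> {A f, B f})" for x
  proof
    assume eq: "PT A B (e # s) x = x"
    then have eq': "transpose a b (q x) = x" by (simp add: pe)
    show False
    proof (cases "q x = a")
      case True
      then have "x = b" using eq' by simp
      then have "(b, a) \<in> (Rl A B (set s))\<^sup>*" using IH(1) True by metis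
      then show False using nc Rl_sym by blast
    next
      case na: False
      show False
      proof (cases "q x = b")
        case True
        then have "x = a" using eq' na by simp
        then have "(a, b) \<in> (Rl A B (set s))\<^sup>*" using IH(1) True by metis
        then show False using nc by blast
      next
        case False
        then have "q x = x" using eq' na by simp
        then have "x \<in> {a, b}" using xc IH(2) by blast
        then show False using \<open>q x = x\<close> na False by auto
      qed
    qed
  qed
  show ?case using conn mv by (auto simp: a_def b_def)
qed

lemma forest_not_transp:
  assumes "distinct s" "set s \<subseteq> E"
    and H: "\<forall>e\<in>E. A e \<noteq> B e \<and> (A e, B e) \<notin> (Rl A B (E - {e}))\<^sup>*"
    and "PT A B s = transpose u v" "u \<noteq> v"
  shows "length s = 1"
proof (cases s)
  case Nil
  then show ?thesis using assms(4,5) by (metis PT_def foldr_Nil id_apply transpose_apply_first)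
next
  case (Cons e1 s1)
  show ?thesis
  proof (cases s1)
    case Nil
    then show ?thesis using Cons by simp
  next
    case (Cons e2 s2)
    note s = \<open>s = e1 # s1\<close> Cons
    have mv: "\<forall>f\<in>set s. \<forall>x\<in>{A f, B f}. transpose u v x \<noteq> x"
      using forest[OF assms(1,2) H] assms(4) by simp
    have cov: "x \<in> {u, v}" if "x \<in> {A f, B f}" "f \<in> set s" for x f
      using mv that by (cases "x = u"; cases "x = v") auto
    have e12: "e1 \<in> E" "e2 \<in> E" using assms(2) s by auto
    have d1: "{A e1, B e1} = {u, v}" using cov[of _ e1] H e12 s by (auto simp: doubleton_eq_iff)
    have d2: "{A e2, B e2} = {u, v}" using cov[of _ e2] H e12 s by (auto simp: doubleton_eq_iff)
    have ne: "e2 \<in> E - {e1}" using assms(1) s e12 by auto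
    have "(A e1, B e1) \<in> Rl A B (E - {e1})" using d1 d2 ne by (auto simp: Rl_def)
    then show ?thesis using H e12 by blast
  qed
qed




fun chain :: "('v \<times> 'v) set \<Rightarrow> 'v list \<Rightarrow> bool" where
  "chain S (a # b # xs) = ((a, b) \<in> S \<and> chain S (b # xs))"
| "chain S _ = True"

lemma chain_ConsD: "chain S (x # zs) \<Longrightarrow> chain S zs"
  by (cases zs) auto

lemma chain_appendD: "chain S (xs @ ys) \<Longrightarrow> chain S ys"
  by (induction xs) (auto dest: chain_ConsD)

lemma chain_nth: "chain S xs \<Longrightarrow> i < length xs - 1 \<Longrightarrow> (xs ! i, xs ! Suc i) \<in> S"
proof (induction S xs arbitrary: i rule: chain.induct)
  case (1 S a b xs)
  then show ?case by (cases i) auto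
qed auto

lemma chain_set: "chain S xs \<Longrightarrow> xs \<noteq> [] \<Longrightarrow> hd xs \<in> V \<Longrightarrow> (\<forall>(a, b)\<in>S. b \<in> V) \<Longrightarrow> set xs \<subseteq> V"
proof (induction S xs rule: chain.induct)
  case (1 S a b xs)
  then show ?case by auto
qed auto

lemma dpath:
  assumes "(x, y) \<in> S\<^sup>*"
  shows "\<exists>xs. xs \<noteq> [] \<and> hd xs = x \<and> last xs = y \<and> distinct xs \<and> chain S xs"
  using assms
proof (induction rule: converse_rtrancl_induct)
  case base
  then show ?case by (intro exI[of _ "[y]"]) auto
next
  case (step x x')
  then obtain xs where xs: "xs \<noteq> []" "hd xs = x'" "last xs = y" "distinct xs" "chain S xs" by blast
  show ?case
  proof (cases "x \<in> set xs")
    case True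
    then obtain as bs where sp: "xs = as @ x # bs" by (metis split_list)
    show ?thesis
      using xs sp chain_appendD[of S as "x # bs"]
      by (intro exI[of _ "x # bs"]) auto
  next
    case False
    obtain zs where "xs = x' # zs" using xs by (cases xs) auto
    then show ?thesis using xs False step(1) by (intro exI[of _ "x # xs"]) auto
  qed
qed

lemma tree_edge_cut:
  assumes "is_tree V E" "{u, v} \<in> E" "u \<noteq> v"
    and "(u, v) \<in> {(x, y). {x, y} \<in> E - {{u, v}}}\<^sup>*"
  shows False
proof -
  define S where "S = {(x, y). {x, y} \<in> E - {{u, v}}}"
  have sg: "simple_graph V E" and ac: "acyclic_graph V E" using assms(1) by (auto simp: is_tree_def)
  have uV: "u \<in> V" and vV: "v \<in> V" using sg assms(2) unfolding simple_graph_def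
    by (metis doubleton_eq_iff)+
  have SV: "\<forall>(a, b)\<in>S. b \<in> V"
    using sg unfolding S_def simple_graph_def by (auto simp: doubleton_eq_iff)
  obtain xs where xs: "xs \<noteq> []" "hd xs = u" "last xs = v" "distinct xs" "chain S xs"
    using dpath[OF assms(4)[folded S_def]] by blast
  have len: "length xs \<ge> 3"
  proof (cases xs)
    case Nil then show ?thesis using xs by simp
  next
    case (Cons a r)
    show ?thesis
    proof (cases r)
      case Nil then show ?thesis using xs Cons assms(3) by simp
    next
      case (Cons b r2)
      show ?thesis
      proof (cases r2)
        case Nil
        then have "(u, v) \<in> S" using xs \<open>xs = a # r\<close> Cons by simp
        then show ?thesis by (simp add: S_def)
      next
        case (Cons c r3) then show ?thesis using \<open>xs = a # r\<close> \<open>r = b # r2\<close> by simp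
      qed
    qed
  qed
  have "is_cycle V E xs"
    unfolding is_cycle_def
  proof (intro conjI allI impI)
    show "set xs \<subseteq> V" using chain_set[OF xs(5) xs(1)] xs(2) uV SV by blast
    fix i assume "i < length xs - 1"
    then have "(xs ! i, xs ! Suc i) \<in> S" using chain_nth xs(5) by blast
    then show "adj E (xs ! i) (xs ! Suc i)" by (simp add: S_def adj_def)
  next
    show "adj E (last xs) (hd xs)" using xs assms(2) by (simp add: adj_def insert_commute)
  qed (use len xs in auto)
  then show False using ac by (auto simp: acyclic_graph_def)
qed




definition ends :: "'a set \<Rightarrow> 'a \<times> 'a" where
  "ends e = (SOME p. e = {fst p, snd p} \<and> fst p \<noteq> snd p)"

lemma ends:
  assumes "simple_graph V E" "e \<in> E"
  shows "e = {fst (ends e), snd (ends e)} \<and> fst (ends e) \<noteq> snd (ends e) \<and> fst (ends e) \<in> V \<and> snd (ends e) \<in> V"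
proof -
  obtain u v where uv: "e = {u, v}" "u \<noteq> v" "u \<in> V" "v \<in> V"
    using assms unfolding simple_graph_def by blast
  have "e = {fst (ends e), snd (ends e)} \<and> fst (ends e) \<noteq> snd (ends e)"
    unfolding ends_def by (rule someI[of _ "(u, v)"]) (use uv in auto)
  then show ?thesis using uv by (auto simp: doubleton_eq_iff)
qed

lemma edge_transp_eq: "e = {u, v} \<Longrightarrow> edge_transp L e = transpose (L u) (L v)"
  unfolding edge_transp_def
  by (rule the_equality) (auto simp: doubleton_eq_iff transpose_commute)

lemma transpose_eq_pair:
  assumes "a \<noteq> b" "transpose a b = transpose c d"
  shows "{a, b} = {c, d}"
proof -
  have 1: "transpose c d a = b" and 2: "transpose c d b = a" using assms by (metis transpose_apply_first transpose_apply_second)+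
  show ?thesis using 1 2 assms(1)
    by (cases "a = c"; cases "a = d"; cases "b = c"; cases "b = d") (auto simp: transpose_def)
qed

lemma transfer_conn:
  assumes inj: "inj_on L V"
    and F: "\<forall>f\<in>F. f = {fst (ends f), snd (ends f)} \<and> fst (ends f) \<in> V \<and> snd (ends f) \<in> V"
    and pq: "(p, q) \<in> (Rl (\<lambda>f. L (fst (ends f))) (\<lambda>f. L (snd (ends f))) F)\<^sup>*"
    and u: "u \<in> V" "p = L u"
  shows "\<exists>w\<in>V. q = L w \<and> (u, w) \<in> {(x, y). {x, y} \<in> F}\<^sup>*"
  using pq
proof (induction rule: rtrancl_induct)
  case base
  then show ?case using u by blast
next
  case (step q r)
  then obtain w where w: "w \<in> V" "q = L w" "(u, w) \<in> {(x, y). {x, y} \<in> F}\<^sup>*" by blast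
  from step(2) obtain f where f: "f \<in> F" "{q, r} = {L (fst (ends f)), L (snd (ends f))}"
    by (auto simp: Rl_def)
  have fe: "f = {fst (ends f), snd (ends f)}" "fst (ends f) \<in> V" "snd (ends f) \<in> V" using F f(1) by auto
  show ?case
  proof (cases "q = L (fst (ends f))")
    case True
    then have "w = fst (ends f)" using inj w fe by (metis inj_on_eq_iff)
    moreover have "r = L (snd (ends f))" using f(2) True by (auto simp: doubleton_eq_iff)
    moreover have "(w, snd (ends f)) \<in> {(x, y). {x, y} \<in> F}" using fe f(1) calculation(1) by auto
    ultimately show ?thesis using w fe by (intro bexI[of _ "snd (ends f)"]) (auto intro: rtrancl_into_rtrancl)
  next
    case False
    then have qB: "q = L (snd (ends f))" and r: "r = L (fst (ends f))" using f(2) by (auto simp: doubleton_eq_iff)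
    then have "w = snd (ends f)" using inj w fe by (metis inj_on_eq_iff)
    moreover have "(w, fst (ends f)) \<in> {(x, y). {x, y} \<in> F}" using fe f(1) calculation(1) by (auto simp: insert_commute)
    ultimately show ?thesis using w fe r by (intro bexI[of _ "fst (ends f)"]) (auto intro: rtrancl_into_rtrancl)
  qed
qed

lemma prodT_PT:
  assumes "simple_graph V E" "set s \<subseteq> E"
  shows "prodT L s = PT (\<lambda>f. L (fst (ends f))) (\<lambda>f. L (snd (ends f))) s"
  using assms(2)
proof (induction s)
  case Nil then show ?case by (simp add: prodT_def PT_def)
next
  case (Cons e s)
  have "edge_transp L e = transpose (L (fst (ends e))) (L (snd (ends e)))"
    using ends[OF assms(1), of e] Cons.prems by (intro edge_transp_eq) auto
  then show ?case using Cons by (simp add: prodT_def PT_def)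
qed

lemma coef_char:
  assumes T: "is_tree V E" and L: "is_labeling V n L" and P: "is_edge_ordering E \<pi>" and ab: "a \<noteq> b"
  shows "cc L \<pi> (transpose a b) \<noteq> 0 \<longleftrightarrow> (\<exists>e\<in>E. edge_transp L e = transpose a b)"
proof -
  define A where "A = (\<lambda>f. L (fst (ends f)))"
  define B where "B = (\<lambda>f. L (snd (ends f)))"
  have sg: "simple_graph V E" using T by (simp add: is_tree_def)
  have inj: "inj_on L V" using L by (simp add: is_labeling_def bij_betw_def)
  have F: "\<forall>f\<in>E - {e}. f = {fst (ends f), snd (ends f)} \<and> fst (ends f) \<in> V \<and> snd (ends f) \<in> V" for e
    using ends[OF sg] by blast
  have H: "\<forall>e\<in>E. A e \<noteq> B e \<and> (A e, B e) \<notin> (Rl A B (E - {e}))\<^sup>*"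
  proof
    fix e assume e: "e \<in> E"
    define u where "u = fst (ends e)"
    define v where "v = snd (ends e)"
    have uv: "e = {u, v}" "u \<noteq> v" "u \<in> V" "v \<in> V" using ends[OF sg e] by (auto simp: u_def v_def)
    have AB: "A e = L u" "B e = L v" by (simp_all add: A_def B_def u_def v_def)
    have "A e \<noteq> B e" using uv inj AB by (metis inj_on_eq_iff)
    moreover have "(A e, B e) \<notin> (Rl A B (E - {e}))\<^sup>*"
    proof
      assume "(A e, B e) \<in> (Rl A B (E - {e}))\<^sup>*"
      then obtain w where w: "w \<in> V" "L v = L w" "(u, w) \<in> {(x, y). {x, y} \<in> E - {e}}\<^sup>*"
        using transfer_conn[OF inj F[of e], where p="A e" and q="B e" and u=u] uv AB unfolding A_def B_def by auto
      then have "w = v" using inj uv by (metis inj_on_eq_iff)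
      then show False using tree_edge_cut[OF T, of u v] w uv e by auto
    qed
    ultimately show "A e \<noteq> B e \<and> (A e, B e) \<notin> (Rl A B (E - {e}))\<^sup>*" by blast
  qed
  define g where "g = (\<lambda>s. if transpose a b = prodT L s then (-1::int)^length s else 0)"
  have sub: "distinct s \<and> set s \<subseteq> E" if "s \<in> set (subseqs \<pi>)" for s
    using that P subseqs_distinctD[of s \<pi>] subseqs_powset[of \<pi>]
    by (auto simp: is_edge_ordering_def)
  have len1: "length s = 1" if "s \<in> set (subseqs \<pi>)" "transpose a b = prodT L s" for s
    using forest_not_transp[of s E A B a b] sub[OF that(1)] H that(2) prodT_PT[OF sg, of s L] ab
    unfolding A_def B_def by auto
  have gv: "- g s \<ge> 0" if "s \<in> set (subseqs \<pi>)" for s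
    using len1[OF that] by (auto simp: g_def)
  have "cc L \<pi> (transpose a b) = - sum_list (map (\<lambda>s. - g s) (subseqs \<pi>))"
    by (simp add: cc_def g_def sum_list_negf')
  then have "cc L \<pi> (transpose a b) = 0 \<longleftrightarrow> (\<forall>s\<in>set (subseqs \<pi>). g s = 0)"
  proof -
    have "sum_list (map (\<lambda>s. - g s) (subseqs \<pi>)) = 0 \<longleftrightarrow> (\<forall>x\<in>set (map (\<lambda>s. - g s) (subseqs \<pi>)). x = 0)"
      by (rule sum_list_nonneg_eq_0_iff) (use gv in auto)
    then show ?thesis using \<open>cc L \<pi> (transpose a b) = _\<close> by auto
  qed
  also have "\<dots> \<longleftrightarrow> \<not> (\<exists>s\<in>set (subseqs \<pi>). transpose a b = prodT L s)"
    by (auto simp: g_def)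
  also have "(\<exists>s\<in>set (subseqs \<pi>). transpose a b = prodT L s) \<longleftrightarrow> (\<exists>e\<in>E. edge_transp L e = transpose a b)"
  proof
    assume "\<exists>s\<in>set (subseqs \<pi>). transpose a b = prodT L s"
    then obtain s where s: "s \<in> set (subseqs \<pi>)" "transpose a b = prodT L s" by blast
    have "length s = 1" using len1 s by blast
    then obtain e where "s = [e]" by (cases s) auto
    moreover have "e \<in> E" using sub[OF s(1)] \<open>s = [e]\<close> by auto
    ultimately show "\<exists>e\<in>E. edge_transp L e = transpose a b" using s by (auto simp: prodT_def)
  next
    assume "\<exists>e\<in>E. edge_transp L e = transpose a b"
    then obtain e where e: "e \<in> E" "edge_transp L e = transpose a b" by blast
    then have "[e] \<in> set (subseqs \<pi>)" using P by (simp add: is_edge_ordering_def subseq_singleton_left)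
    then show "\<exists>s\<in>set (subseqs \<pi>). transpose a b = prodT L s" using e by (auto simp: prodT_def intro!: bexI[of _ "[e]"])
  qed
  finally show ?thesis by blast
qed




lemma edge_iff:
  assumes T: "is_tree V E" and L: "is_labeling V n L" and xy: "x \<in> V" "y \<in> V" "x \<noteq> y"
  shows "{x, y} \<in> E \<longleftrightarrow> (\<exists>e\<in>E. edge_transp L e = transpose (L x) (L y))"
proof
  assume "{x, y} \<in> E" then show "\<exists>e\<in>E. edge_transp L e = transpose (L x) (L y)"
    using edge_transp_eq[of "{x, y}" x y L] by blast
next
  have sg: "simple_graph V E" using T by (simp add: is_tree_def)
  have inj: "inj_on L V" using L by (simp add: is_labeling_def bij_betw_def)
  assume "\<exists>e\<in>E. edge_transp L e = transpose (L x) (L y)"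
  then obtain e where e: "e \<in> E" "edge_transp L e = transpose (L x) (L y)" by blast
  have uv: "e = {fst (ends e), snd (ends e)}" "fst (ends e) \<in> V" "snd (ends e) \<in> V"
    using ends[OF sg e(1)] by auto
  have Lxy: "L x \<noteq> L y" using inj xy by (metis inj_on_eq_iff)
  have "transpose (L x) (L y) = transpose (L (fst (ends e))) (L (snd (ends e)))"
    using e(2) edge_transp_eq[OF uv(1)] by simp
  then have "{L x, L y} = {L (fst (ends e)), L (snd (ends e))}" by (rule transpose_eq_pair[OF Lxy])
  then have "(L x = L (fst (ends e)) \<and> L y = L (snd (ends e))) \<or> (L x = L (snd (ends e)) \<and> L y = L (fst (ends e)))"
    by (simp add: doubleton_eq_iff)
  then have "(x = fst (ends e) \<and> y = snd (ends e)) \<or> (x = snd (ends e) \<and> y = fst (ends e))"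
    using inj xy uv by (simp add: inj_on_eq_iff)
  then have "{x, y} = e" using uv(1) by (auto simp: insert_commute)
  then show "{x, y} \<in> E" using e by simp
qed

lemma edges_transp:
  assumes T: "is_tree V E" and L: "is_labeling V n L" and P: "is_edge_ordering E \<pi>"
  shows "\<forall>e\<in>set \<pi>. \<exists>a b. a \<noteq> b \<and> a \<in> {1..n} \<and> b \<in> {1..n} \<and> edge_transp L e = transpose a b"
proof
  fix e assume "e \<in> set \<pi>"
  then have e: "e \<in> E" using P by (simp add: is_edge_ordering_def)
  have sg: "simple_graph V E" using T by (simp add: is_tree_def)
  have inj: "inj_on L V" and im: "L ` V = {1..n}" using L by (auto simp: is_labeling_def bij_betw_def)
  have uv: "e = {fst (ends e), snd (ends e)}" "fst (ends e) \<noteq> snd (ends e)" "fst (ends e) \<in> V" "snd (ends e) \<in> V"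
    using ends[OF sg e] by auto
  show "\<exists>a b. a \<noteq> b \<and> a \<in> {1..n} \<and> b \<in> {1..n} \<and> edge_transp L e = transpose a b"
    using edge_transp_eq[OF uv(1)] uv inj im
    by (intro exI[of _ "L (fst (ends e))"] exI[of _ "L (snd (ends e))"]) (auto simp: inj_on_eq_iff)
qed

lemma K_val:
  assumes T: "is_tree V E" and L: "is_labeling V n L" and P: "is_edge_ordering E \<pi>" and g: "g \<in> Sn n"
  shows "K_elem n L \<pi> g = of_nat (fact n) * of_int (cc L \<pi> g)"
  using pom_cc[OF edges_transp[OF T L P] g] g by (simp add: K_elem_def ga_scale_def)

theorem mainTheorem10:
  fixes V1 :: "'a set" and E1 :: "'a set set" and V2 :: "'b set" and E2 :: "'b set set"
    and n :: nat and L1 :: "'a \<Rightarrow> nat" and L2 :: "'b \<Rightarrow> nat"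
    and \<pi>1 :: "'a set list" and \<pi>2 :: "'b set list" and \<sigma> :: "nat \<Rightarrow> nat"
  assumes "is_tree V1 E1" and "is_tree V2 E2"
    and "card V1 = n" and "card V2 = n"
    and "is_labeling V1 n L1" and "is_labeling V2 n L2"
    and "is_edge_ordering E1 \<pi>1" and "is_edge_ordering E2 \<pi>2"
    and "\<sigma> \<in> Sn n"
    and "ga_mult n (ga_mult n (ga_of n \<sigma>) (K_elem n L1 \<pi>1)) (ga_of n (inv \<sigma>))
         = K_elem n L2 \<pi>2"
  shows "graph_iso V1 E1 V2 E2"
proof -
  note T1 = assms(1) and T2 = assms(2) and La = assms(5) and Lb = assms(6)
    and P1 = assms(7) and P2 = assms(8) and sS = assms(9) and hyp = assms(10)
  have sp: "\<sigma> permutes {1..n}" using sS by (simp add: Sn_def)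
  have sg1: "simple_graph V1 E1" and sg2: "simple_graph V2 E2" using T1 T2 by (auto simp: is_tree_def)
  have b1: "bij_betw L1 V1 {1..n}" and b2: "bij_betw L2 V2 {1..n}"
    using La Lb by (auto simp: is_labeling_def)
  have inj1: "inj_on L1 V1" and inj2: "inj_on L2 V2" using b1 b2 by (auto simp: bij_betw_def)
  have im2: "L2 ` V2 = {1..n}" using b2 by (simp add: bij_betw_def)
  have bs: "bij_betw \<sigma> {1..n} {1..n}" using sp by (rule permutes_imp_bij)
  define f where "f = inv_into V2 L2 \<circ> \<sigma> \<circ> L1"
  have bf: "bij_betw f V1 V2" unfolding f_def
    using bij_betw_trans[OF bij_betw_trans[OF b1 bs] bij_betw_inv_into[OF b2]] by (simp only: o_assoc)
  have sL: "\<sigma> (L1 x) \<in> {1..n}" if "x \<in> V1" for x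
    using that b1 bs by (meson bij_betwE)
  have Lf: "L2 (f x) = \<sigma> (L1 x)" if "x \<in> V1" for x
    using sL[OF that] im2 by (simp add: f_def f_inv_into_f)
  have fV: "f x \<in> V2" if "x \<in> V1" for x using bf that by (meson bij_betwE)
  have coef: "cc L1 \<pi>1 (transpose (inv \<sigma> a) (inv \<sigma> b)) = cc L2 \<pi>2 (transpose a b)"
    if ab: "a \<in> {1..n}" "b \<in> {1..n}" for a b
  proof -
    define t where "t = transpose a b"
    have tS: "t \<in> Sn n" using ab by (simp add: Sn_def t_def permutes_swap_id)
    have conj: "inv \<sigma> \<circ> t \<circ> \<sigma> = transpose (inv \<sigma> a) (inv \<sigma> b)"
    proof -
      have "t \<circ> \<sigma> = \<sigma> \<circ> transpose (inv \<sigma> a) (inv \<sigma> b)"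
        unfolding t_def by (rule transpose_comp_eq) (use sp in \<open>rule permutes_bij\<close>)
      then have "inv \<sigma> \<circ> t \<circ> \<sigma> = (inv \<sigma> \<circ> \<sigma>) \<circ> transpose (inv \<sigma> a) (inv \<sigma> b)"
        by (simp add: comp_assoc)
      then show ?thesis using permutes_inv_o(2)[OF sp] by simp
    qed
    have cS: "transpose (inv \<sigma> a) (inv \<sigma> b) \<in> Sn n"
    proof -
      have ip: "inv \<sigma> permutes {1..n}" using sp by (rule permutes_inv)
      have "inv \<sigma> a \<in> {1..n}" "inv \<sigma> b \<in> {1..n}" using ab permutes_in_image[OF ip] by auto
      then show ?thesis by (simp add: Sn_def permutes_swap_id)
    qed
    have "K_elem n L2 \<pi>2 t = K_elem n L1 \<pi>1 (transpose (inv \<sigma> a) (inv \<sigma> b))"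
      using conj_val[OF sS tS, of "K_elem n L1 \<pi>1"] hyp conj by simp
    then have "of_nat (fact n) * (of_int (cc L2 \<pi>2 t) :: complex)
         = of_nat (fact n) * of_int (cc L1 \<pi>1 (transpose (inv \<sigma> a) (inv \<sigma> b)))"
      using K_val[OF T1 La P1 cS] K_val[OF T2 Lb P2 tS] by simp
    then show ?thesis by (simp add: t_def)
  qed
  have "\<forall>u\<in>V1. \<forall>v\<in>V1. ({u, v} \<in> E1 \<longleftrightarrow> {f u, f v} \<in> E2)"
  proof (intro ballI)
    fix x y assume x: "x \<in> V1" and y: "y \<in> V1"
    show "{x, y} \<in> E1 \<longleftrightarrow> {f x, f y} \<in> E2"
    proof (cases "x = y")
      case True
      have "{x} \<notin> E1" using sg1 unfolding simple_graph_def by (auto simp: doubleton_eq_iff)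
      moreover have "{f x} \<notin> E2" using sg2 unfolding simple_graph_def by (auto simp: doubleton_eq_iff)
      ultimately show ?thesis using True by simp
    next
      case False
      have fxy: "f x \<noteq> f y" using bij_betw_imp_inj_on[OF bf] x y False by (simp add: inj_on_eq_iff)
      have L1xy: "L1 x \<noteq> L1 y" using inj1 x y False by (simp add: inj_on_eq_iff)
      have ab: "\<sigma> (L1 x) \<noteq> \<sigma> (L1 y)" using L1xy permutes_inj[OF sp] by (simp add: inj_eq)
      have iv: "inv \<sigma> (\<sigma> z) = z" for z using permutes_inverses(2)[OF sp] by simp
      have "{x, y} \<in> E1 \<longleftrightarrow> (\<exists>e\<in>E1. edge_transp L1 e = transpose (L1 x) (L1 y))"
        by (rule edge_iff[OF T1 La x y False])
      also have "\<dots> \<longleftrightarrow> cc L1 \<pi>1 (transpose (L1 x) (L1 y)) \<noteq> 0"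
        using coef_char[OF T1 La P1 L1xy] by simp
      also have "cc L1 \<pi>1 (transpose (L1 x) (L1 y)) = cc L2 \<pi>2 (transpose (\<sigma> (L1 x)) (\<sigma> (L1 y)))"
        using coef[OF sL[OF x] sL[OF y]] iv by simp
      also have "(\<dots> \<noteq> 0) \<longleftrightarrow> (\<exists>e\<in>E2. edge_transp L2 e = transpose (L2 (f x)) (L2 (f y)))"
        using coef_char[OF T2 Lb P2 ab] Lf x y by simp
      also have "\<dots> \<longleftrightarrow> {f x, f y} \<in> E2"
        by (rule edge_iff[OF T2 Lb fV[OF x] fV[OF y] fxy, symmetric])
      finally show ?thesis .
    qed
  qed
  then show ?thesis unfolding graph_iso_def using bf by blast
qed


end
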